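(* Let $\vec{p}\in\Delta^n$ and let $\mathcal{D}=\mathrm{Mul}_k(\vec{p})$. Then $\mathcal{D}$ is $(k,\infty)$-explicitly bounded with variance proxy $8/k$; that is, for every even $s$ with $2\le s\le k$, $$\{v_i^2=1\ \forall i\in[n]\}\ \vdash_{s}\ \mathbb{E}_{Y\sim\mathcal{D}}\big[\langle Y-\vec{p},v\rangle^s\big]\le (8s/k)^{s/2},$$ where this is regarded as a polynomial inequality in the formal variables $v_1,\dots,v_n$.
   Context: $\Delta^n\subset\mathbb{R}^n$ is the simplex of nonnegative vectors with coordinates summing to 1. For $\vec{p}\in\Delta^n$, $\mathrm{Mul}_k(\vec{p})$ is the distribution of the frequency vector $Y\in\Delta^n$, $Y_j=\frac1k\#\{\nu\le k: Z_\nu=j\}$, where $Z_1,\dots,Z_k$ are i.i.d. draws from $\vec{p}$; its mean is $\vec{p}$. For polynomials in formal variables $v$, the notation $\{q_1=0,\dots,q_m=0\}\vdash_d f\ge 0$ (a degree-$d$ sum-of-squares proof) means there exist polynomials $s_1,\dots,s_m$ and a sum-of-squares polynomial $r$ such that $f=\sum_i s_iq_i + r$ with $\deg(s_iq_i)\le d$ for all $i$ and $\deg r\le d$. A distribution $\mathcal{D}$ on $\mathbb{R}^n$ with mean $\mu$ is $(t,\infty)$-explicitly bounded with variance proxy $\sigma$ if for every even $2\le s\le t$, $\{v_i^2=1\ \forall i\in[n]\}\vdash_s \mathbb{E}_{Y\sim\mathcal{D}}[\langle Y-\mu,v\rangle^s]\le(\sigma s)^{s/2}$. *)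

theory Defs
  imports "HOL-Analysis.Analysis" "HOL-Library.Poly_Mapping"
begin

text \<open>Real multivariate polynomials in the formal variables v_0, v_1, ... :
  a monomial is a finitely supported exponent vector (a finitely supported nat-to-nat map), a polynomial
  is a finitely supported map from monomials to real coefficients; the ring
  operations are those of Poly_Mapping (convolution product).\<close>

type_synonym mpoly = "(nat \<Rightarrow>\<^sub>0 nat) \<Rightarrow>\<^sub>0 real"

definition mvar :: "nat \<Rightarrow> mpoly" where
  "mvar i = Poly_Mapping.single (Poly_Mapping.single i 1) 1"

definition mconst :: "real \<Rightarrow> mpoly" where
  "mconst c = Poly_Mapping.single 0 c"

definition mon_deg :: "(nat \<Rightarrow>\<^sub>0 nat) \<Rightarrow> nat" where
  "mon_deg m = (\<Sum>i\<in>Poly_Mapping.keys m. Poly_Mapping.lookup m i)"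

text \<open>Total degree (degree of the zero polynomial taken to be 0).\<close>
definition total_deg :: "mpoly \<Rightarrow> nat" where
  "total_deg p = Max (insert 0 (mon_deg ` Poly_Mapping.keys p))"

definition is_sos :: "mpoly \<Rightarrow> bool" where
  "is_sos r \<longleftrightarrow> (\<exists>qs. r = (\<Sum>q\<leftarrow>qs. q * q))"

text \<open>Degree-d SoS proof: {q_1 = 0, ..., q_m = 0} \<turnstile>_d f \<ge> 0.\<close>
definition sos_proves :: "mpoly list \<Rightarrow> nat \<Rightarrow> mpoly \<Rightarrow> bool" where
  "sos_proves qs d f \<longleftrightarrow>
     (\<exists>ss r. length ss = length qs \<and>
        f = (\<Sum>i<length qs. ss ! i * qs ! i) + r \<and>
        (\<forall>i<length qs. total_deg (ss ! i * qs ! i) \<le> d) \<and>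
        is_sos r \<and> total_deg r \<le> d)"

text \<open>The Boolean constraints v_i^2 = 1 for i in [n] (variables indexed 0..n-1).\<close>
definition bool_axioms :: "nat \<Rightarrow> mpoly list" where
  "bool_axioms n = map (\<lambda>i. mvar i * mvar i - 1) [0..<n]"

definition prob_simplex :: "nat \<Rightarrow> (nat \<Rightarrow> real) set" where
  "prob_simplex n = {p. (\<forall>i<n. 0 \<le> p i) \<and> (\<Sum>i<n. p i) = 1}"

definition freq :: "nat \<Rightarrow> (nat \<Rightarrow> nat) \<Rightarrow> nat \<Rightarrow> real" where
  "freq k z j = real (card {\<nu>. \<nu> < k \<and> z \<nu> = j}) / real k"

text \<open>Expectation of a (polynomial-valued) function of Y ~ Mul_k(p): Y is the
  frequency vector of k i.i.d. draws Z_1..Z_k from p.\<close>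
definition mul_expect :: "nat \<Rightarrow> nat \<Rightarrow> (nat \<Rightarrow> real) \<Rightarrow> ((nat \<Rightarrow> real) \<Rightarrow> mpoly) \<Rightarrow> mpoly" where
  "mul_expect n k p F =
     (\<Sum>z\<in>{..<k} \<rightarrow>\<^sub>E {..<n}. mconst (\<Prod>\<nu><k. p (z \<nu>)) * F (freq k z))"

definition lin_form :: "nat \<Rightarrow> (nat \<Rightarrow> real) \<Rightarrow> mpoly" where
  "lin_form n a = (\<Sum>i<n. mconst (a i) * mvar i)"

end

theory Submission
  imports Defs
begin


lemma mconst_0[simp]: "mconst 0 = 0" unfolding mconst_def by simp
lemma mconst_1[simp]: "mconst 1 = 1" unfolding mconst_def by simp
lemma mconst_add: "mconst (a + b) = mconst a + mconst b" unfolding mconst_def by (simp add: single_add)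
lemma mconst_diff: "mconst (a - b) = mconst a - mconst b" unfolding mconst_def by (simp add: single_diff)
lemma mconst_uminus: "mconst (- a) = - mconst a" unfolding mconst_def by (simp add: single_uminus)
lemma mconst_mult: "mconst (a * b) = mconst a * mconst b" unfolding mconst_def by (simp add: mult_single)
lemma mconst_sum: "mconst (\<Sum>x\<in>A. f x) = (\<Sum>x\<in>A. mconst (f x))"
  by (induction A rule: infinite_finite_induct) (auto simp: mconst_add)
lemma mconst_prod: "mconst (\<Prod>x\<in>A. f x) = (\<Prod>x\<in>A. mconst (f x))"
  by (induction A rule: infinite_finite_induct) (auto simp: mconst_mult)
lemma mconst_power: "mconst (a ^ m) = mconst a ^ m"
  by (induction m) (auto simp: mconst_mult)
lemma mconst_of_nat: "mconst (of_nat m) = of_nat m"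
  by (induction m) (auto simp: mconst_add)

lemma mconst_numeral[simp]: "mconst (numeral w) = numeral w"
  using mconst_of_nat[of "numeral w"] by simp

definition dle :: "mpoly \<Rightarrow> nat \<Rightarrow> bool" where
  "dle p d \<longleftrightarrow> (\<forall>m \<in> Poly_Mapping.keys p. mon_deg m \<le> d)"

lemma total_deg_le_iff: "total_deg p \<le> d \<longleftrightarrow> dle p d"
  unfolding total_deg_def dle_def by auto

lemma mon_deg_sum: "finite S \<Longrightarrow> Poly_Mapping.keys m \<subseteq> S \<Longrightarrow> mon_deg m = (\<Sum>i\<in>S. Poly_Mapping.lookup m i)"
  unfolding mon_deg_def by (rule sum.mono_neutral_left) (auto simp: in_keys_iff)

lemma mon_deg_add: "mon_deg (a + b) = mon_deg a + mon_deg b"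
proof -
  let ?S = "Poly_Mapping.keys a \<union> Poly_Mapping.keys b"
  have f: "finite ?S" by simp
  have "mon_deg (a + b) = (\<Sum>i\<in>?S. Poly_Mapping.lookup (a + b) i)"
    using keys_add[of a b] by (intro mon_deg_sum f) auto
  also have "\<dots> = (\<Sum>i\<in>?S. Poly_Mapping.lookup a i) + (\<Sum>i\<in>?S. Poly_Mapping.lookup b i)"
    by (simp add: lookup_add sum.distrib)
  also have "\<dots> = mon_deg a + mon_deg b"
    by (subst (1 2) mon_deg_sum[OF f]) auto
  finally show ?thesis .
qed

lemma mon_deg_0[simp]: "mon_deg 0 = 0" unfolding mon_deg_def by simp

lemma dle_mono: "dle p d \<Longrightarrow> d \<le> e \<Longrightarrow> dle p e"
  unfolding dle_def by auto
lemma dle_0[simp]: "dle 0 d" unfolding dle_def by simp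
lemma dle_add: "dle p d \<Longrightarrow> dle q d \<Longrightarrow> dle (p + q) d"
  unfolding dle_def using keys_add[of p q] by blast
lemma dle_uminus[simp]: "dle (- p) d = dle p d"
  unfolding dle_def by simp
lemma dle_diff: "dle p d \<Longrightarrow> dle q d \<Longrightarrow> dle (p - q) d"
  using dle_add[of p d "-q"] by simp
lemma dle_mult: "dle p d \<Longrightarrow> dle q e \<Longrightarrow> dle (p * q) (d + e)"
  unfolding dle_def using keys_mult[of p q] by (force simp: mon_deg_add intro: add_mono)
lemma dle_mconst[simp]: "dle (mconst c) 0"
  unfolding dle_def mconst_def by simp
lemma dle_one[simp]: "dle 1 0"
  using dle_mconst[of 1] by simp
lemma dle_mvar: "dle (mvar i) 1"
  unfolding dle_def mvar_def mon_deg_def by simp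
lemma dle_sum: "(\<And>x. x \<in> A \<Longrightarrow> dle (f x) d) \<Longrightarrow> dle (\<Sum>x\<in>A. f x) d"
  by (induction A rule: infinite_finite_induct) (auto intro: dle_add)
lemma dle_prod: "finite A \<Longrightarrow> (\<And>x. x \<in> A \<Longrightarrow> dle (f x) 1) \<Longrightarrow> dle (\<Prod>x\<in>A. f x) (card A)"
proof (induction A rule: finite_induct)
  case empty then show ?case by simp
next
  case (insert x A)
  then show ?case using dle_mult[of "f x" 1 "prod f A" "card A"] by simp
qed



lemma is_sos_0[simp]: "is_sos 0"
  unfolding is_sos_def by (rule exI[of _ "[]"]) simp
lemma is_sos_add: "is_sos a \<Longrightarrow> is_sos b \<Longrightarrow> is_sos (a + b)"
proof -
  assume "is_sos a" "is_sos b"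
  then obtain qa qb where "a = (\<Sum>q\<leftarrow>qa. q * q)" "b = (\<Sum>q\<leftarrow>qb. q * q)"
    unfolding is_sos_def by blast
  then show ?thesis unfolding is_sos_def by (intro exI[of _ "qa @ qb"]) simp
qed
lemma is_sos_sq: "is_sos (q * q)"
  unfolding is_sos_def by (rule exI[of _ "[q]"]) simp
lemma sum_list_scale: "(a::mpoly) * a * (\<Sum>q\<leftarrow>qs. q * q) = (\<Sum>q\<leftarrow>map ((*) a) qs. q * q)"
  by (induction qs) (simp_all add: algebra_simps)
lemma is_sos_scale: "is_sos r \<Longrightarrow> is_sos (a * a * r)"
  unfolding is_sos_def using sum_list_scale by blast

lemma sos_proves_mono: "sos_proves qs d f \<Longrightarrow> d \<le> e \<Longrightarrow> sos_proves qs e f"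
  unfolding sos_proves_def by (blast intro: le_trans)

lemma sos_proves_0: "sos_proves qs d 0"
  unfolding sos_proves_def
  by (rule exI[of _ "replicate (length qs) 0"], rule exI[of _ 0]) (simp add: total_deg_le_iff)

lemma sos_proves_sq: "dle a e \<Longrightarrow> 2 * e \<le> d \<Longrightarrow> sos_proves qs d (a * a)"
  unfolding sos_proves_def
  apply (rule exI[of _ "replicate (length qs) 0"], rule exI[of _ "a * a"])
  apply (simp add: total_deg_le_iff is_sos_sq)
  using dle_mult[of a e a e] dle_mono by (simp add: mult_2)

lemma sos_proves_add:
  assumes "sos_proves qs d f" "sos_proves qs d g"
  shows "sos_proves qs d (f + g)"
proof -
  obtain ss1 r1 where 1: "length ss1 = length qs" "f = (\<Sum>i<length qs. ss1 ! i * qs ! i) + r1"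
    "\<forall>i<length qs. dle (ss1 ! i * qs ! i) d" "is_sos r1" "dle r1 d"
    using assms(1) unfolding sos_proves_def total_deg_le_iff by blast
  obtain ss2 r2 where 2: "length ss2 = length qs" "g = (\<Sum>i<length qs. ss2 ! i * qs ! i) + r2"
    "\<forall>i<length qs. dle (ss2 ! i * qs ! i) d" "is_sos r2" "dle r2 d"
    using assms(2) unfolding sos_proves_def total_deg_le_iff by blast
  let ?ss = "map (\<lambda>i. ss1 ! i + ss2 ! i) [0..<length qs]"
  show ?thesis unfolding sos_proves_def total_deg_le_iff
  proof (intro exI[of _ ?ss] exI[of _ "r1 + r2"] conjI allI impI)
    show "f + g = (\<Sum>i<length qs. ?ss ! i * qs ! i) + (r1 + r2)"
      using 1(2) 2(2) by (simp add: algebra_simps sum.distrib)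
    fix i assume "i < length qs"
    then show "dle (?ss ! i * qs ! i) d"
      using 1(3) 2(3) by (simp add: distrib_right dle_add)
  qed (use 1 2 in \<open>auto intro: is_sos_add dle_add\<close>)
qed

lemma sos_proves_scale:
  assumes "sos_proves qs d f" "dle a e"
  shows "sos_proves qs (d + 2 * e) (a * a * f)"
proof -
  obtain ss1 r1 where 1: "length ss1 = length qs" "f = (\<Sum>i<length qs. ss1 ! i * qs ! i) + r1"
    "\<forall>i<length qs. dle (ss1 ! i * qs ! i) d" "is_sos r1" "dle r1 d"
    using assms(1) unfolding sos_proves_def total_deg_le_iff by blast
  have aa: "dle (a * a) (2 * e)" using dle_mult[OF assms(2) assms(2)] by (simp add: mult_2)
  let ?ss = "map (\<lambda>x. a * a * x) ss1"
  show ?thesis unfolding sos_proves_def total_deg_le_iff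
  proof (intro exI[of _ ?ss] exI[of _ "a * a * r1"] conjI allI impI)
    show "a * a * f = (\<Sum>i<length qs. ?ss ! i * qs ! i) + a * a * r1"
      using 1(1,2) by (simp add: algebra_simps sum_distrib_left)
    fix i assume "i < length qs"
    then show "dle (?ss ! i * qs ! i) (d + 2 * e)"
      using 1(1,3) dle_mult[OF aa, of "ss1 ! i * qs ! i" d] by (simp add: mult.assoc add.commute)
  next
    show "dle (a * a * r1) (d + 2 * e)"
      using 1 dle_mult[OF aa, of r1 d] by (simp add: add.commute)
  qed (use 1 in \<open>auto intro: is_sos_scale\<close>)
qed

lemma sos_proves_cscale:
  assumes "sos_proves qs d f" "c \<ge> 0"
  shows "sos_proves qs d (mconst c * f)"
proof -
  have "mconst c = mconst (sqrt c) * mconst (sqrt c)"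
    using assms(2) by (simp flip: mconst_mult)
  then show ?thesis using sos_proves_scale[OF assms(1) dle_mconst[of "sqrt c"]] by simp
qed

lemma sos_proves_const: "c \<ge> 0 \<Longrightarrow> sos_proves qs d (mconst c)"
  using sos_proves_cscale[OF sos_proves_sq[OF dle_one, of d qs], of c] by simp

lemma sos_proves_sum:
  "(\<And>x. x \<in> A \<Longrightarrow> sos_proves qs d (f x)) \<Longrightarrow> sos_proves qs d (\<Sum>x\<in>A. f x)"
  by (induction A rule: infinite_finite_induct) (auto intro: sos_proves_add sos_proves_0)

lemma sos_proves_ideal:
  assumes "i < length qs" "dle (c * qs ! i) d"
  shows "sos_proves qs d (c * qs ! i)"
proof -
  let ?ss = "(replicate (length qs) 0)[i := c]"
  have "(\<Sum>j<length qs. ?ss ! j * qs ! j) = (\<Sum>j<length qs. if j = i then c * qs ! i else 0)"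
    using assms(1) by (intro sum.cong) auto
  also have "\<dots> = c * qs ! i" using assms(1) by simp
  finally have e: "(\<Sum>j<length qs. ?ss ! j * qs ! j) = c * qs ! i" .
  show ?thesis unfolding sos_proves_def total_deg_le_iff
    by (intro exI[of _ ?ss] exI[of _ 0]) (use assms e in \<open>auto simp: nth_list_update\<close>)
qed



abbreviation Pv :: "nat \<Rightarrow> nat \<Rightarrow> mpoly \<Rightarrow> bool" where
  "Pv n d f \<equiv> sos_proves (bool_axioms n) d f"

lemma dle_mvar2: "dle (mvar i * mvar i) 2"
  using dle_mult[OF dle_mvar dle_mvar, of i i] by (simp add: numeral_2_eq_2)

lemma bool_ideal:
  assumes "i < n"
  shows "Pv n 2 (mconst c * (1 - mvar i * mvar i))"
proof -
  have e: "mconst c * (1 - mvar i * mvar i) = mconst (- c) * (bool_axioms n ! i)"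
    using assms by (simp add: bool_axioms_def mconst_uminus algebra_simps)
  have "dle (mvar i * mvar i - 1) 2"
    using dle_mvar2 dle_mono[OF dle_one] by (intro dle_diff) auto
  then have "dle (mconst (- c) * (bool_axioms n ! i)) 2"
    using assms dle_mult[OF dle_mconst, of "mvar i * mvar i - 1" 2 "-c"]
    by (simp add: bool_axioms_def numeral_2_eq_2)
  then show ?thesis unfolding e using assms by (intro sos_proves_ideal) (auto simp: bool_axioms_def)
qed

lemma simplex_sum: "p \<in> prob_simplex n \<Longrightarrow> (\<Sum>j<n. mconst (p j)) = 1"
  unfolding prob_simplex_def by (simp flip: mconst_sum)

lemma dle_lin_form: "dle (lin_form n a) 1"
  unfolding lin_form_def by (rule dle_sum) (use dle_mult[OF dle_mconst dle_mvar] in simp)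

lemma box:
  assumes p: "p \<in> prob_simplex n" and i: "i < n"
  shows "Pv n 2 (mconst 4 - (mvar i - lin_form n p) * (mvar i - lin_form n p))"
proof -
  define m where "m = lin_form n p"
  define v where "v = mvar"
  define A where "A = (\<Sum>j<n. mconst (p j) * (v j * v j))"
  have m_def': "m = (\<Sum>j<n. mconst (p j) * v j)" unfolding m_def lin_form_def v_def ..
  have S1: "(\<Sum>j<n. mconst (p j)) = 1" using simplex_sum[OF p] .
  have F1: "(\<Sum>j<n. mconst (2 * p j) * (1 - v j * v j)) = mconst 2 - 2 * A"
  proof -
    have "(\<Sum>j<n. mconst (2 * p j) * (1 - v j * v j))
        = 2 * (\<Sum>j<n. mconst (p j)) - 2 * A"
      unfolding A_def by (simp add: mconst_mult algebra_simps sum_distrib_left sum_subtractf)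
    then show ?thesis using S1 by simp
  qed
  have F2: "(\<Sum>j<n. \<Sum>l<n. mconst (p j * p l) * ((v j - v l) * (v j - v l))) = 2 * A - 2 * (m * m)"
  proof -
    have t: "mconst (p j * p l) * ((v j - v l) * (v j - v l)) =
        (mconst (p j) * (v j * v j)) * mconst (p l) + mconst (p j) * (mconst (p l) * (v l * v l))
        - 2 * ((mconst (p j) * v j) * (mconst (p l) * v l))" for j l
      by (simp add: mconst_mult algebra_simps)
    have "(\<Sum>j<n. \<Sum>l<n. mconst (p j * p l) * ((v j - v l) * (v j - v l)))
      = A * (\<Sum>l<n. mconst (p l)) + (\<Sum>j<n. mconst (p j)) * A - 2 * (m * m)"
    proof -
      have a: "(\<Sum>j<n. \<Sum>l<n. (mconst (p j) * (v j * v j)) * mconst (p l)) = A * (\<Sum>l<n. mconst (p l))"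
        unfolding A_def by (simp add: sum_product)
      have b: "(\<Sum>j<n. \<Sum>l<n. mconst (p j) * (mconst (p l) * (v l * v l))) = (\<Sum>j<n. mconst (p j)) * A"
        unfolding A_def by (simp add: sum_product)
      have c: "(\<Sum>j<n. \<Sum>l<n. 2 * ((mconst (p j) * v j) * (mconst (p l) * v l))) = 2 * (m * m)"
      proof -
        have "m * m = (\<Sum>j<n. \<Sum>l<n. (mconst (p j) * v j) * (mconst (p l) * v l))"
          unfolding m_def' by (rule sum_product)
        then show ?thesis by (simp add: sum_distrib_left)
      qed
      show ?thesis unfolding t by (simp only: sum_subtractf sum.distrib a b c)
    qed
    then show ?thesis using S1 by simp
  qed
  have key: "mconst 4 - (v i - m) * (v i - m) =
      (v i + m) * (v i + m) + mconst 2 * (1 - v i * v i)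
      + (\<Sum>j<n. mconst (2 * p j) * (1 - v j * v j))
      + (\<Sum>j<n. \<Sum>l<n. mconst (p j * p l) * ((v j - v l) * (v j - v l)))"
    unfolding F1 F2
    by (simp add: algebra_simps numeral_eq_Suc mconst_add flip: mconst_1)
  have "Pv n 2 ((v i + m) * (v i + m))"
    by (rule sos_proves_sq[of _ 1]) (use dle_add[OF dle_mvar dle_lin_form] in \<open>auto simp: v_def m_def\<close>)
  moreover have "Pv n 2 (mconst 2 * (1 - v i * v i))" unfolding v_def using bool_ideal[OF i] .
  moreover have "Pv n 2 (\<Sum>j<n. mconst (2 * p j) * (1 - v j * v j))"
    unfolding v_def by (rule sos_proves_sum) (rule bool_ideal, simp)
  moreover have "Pv n 2 (\<Sum>j<n. \<Sum>l<n. mconst (p j * p l) * ((v j - v l) * (v j - v l)))"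
  proof (intro sos_proves_sum sos_proves_cscale)
    fix j l assume "j \<in> {..<n}" "l \<in> {..<n}"
    then show "0 \<le> p j * p l" using p unfolding prob_simplex_def by auto
    show "Pv n 2 ((v j - v l) * (v j - v l))"
      by (rule sos_proves_sq[of _ 1]) (use dle_diff[OF dle_mvar dle_mvar] in \<open>auto simp: v_def\<close>)
  qed
  ultimately show ?thesis unfolding key[unfolded v_def m_def] v_def m_def
    by (intro sos_proves_add)
qed



lemma prod_sq_bound:
  assumes "finite J" "\<And>j. j \<in> J \<Longrightarrow> dle (y j) 1 \<and> Pv n 2 (mconst 4 - y j * y j)"
  shows "Pv n (2 * card J) (mconst (4 ^ card J) - prod y J * prod y J)"
  using assms
proof (induction J rule: finite_induct)
  case empty
  then show ?case using sos_proves_0 by simp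
next
  case (insert j J)
  let ?P = "prod y J" and ?c = "card J"
  have IH: "Pv n (2 * ?c) (mconst (4 ^ ?c) - ?P * ?P)" using insert by auto
  have dP: "dle ?P ?c" using insert by (intro dle_prod) auto
  have e: "mconst (4 ^ card (insert j J)) - prod y (insert j J) * prod y (insert j J)
     = mconst 2 * mconst 2 * (mconst (4 ^ ?c) - ?P * ?P) + ?P * ?P * (mconst 4 - y j * y j)"
    using insert by (simp add: mconst_mult mconst_power algebra_simps)
  have 1: "Pv n (2 * card (insert j J)) (mconst 2 * mconst 2 * (mconst (4 ^ ?c) - ?P * ?P))"
    using sos_proves_scale[OF IH dle_mconst[of 2]] insert
    by (auto intro: sos_proves_mono)
  have 2: "Pv n (2 * card (insert j J)) (?P * ?P * (mconst 4 - y j * y j))"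
    using sos_proves_scale[OF _ dP, of "bool_axioms n" 2 "mconst 4 - y j * y j"] insert
    by auto
  show ?case unfolding e by (rule sos_proves_add[OF 1 2])
qed

lemma amgm:
  assumes "finite J1" "finite J2" "card J1 = h" "card J2 = h"
    "\<And>j. j \<in> J1 \<union> J2 \<Longrightarrow> dle (y j) 1 \<and> Pv n 2 (mconst 4 - y j * y j)"
  shows "Pv n (2 * h) (mconst (2 ^ (2 * h)) - prod y J1 * prod y J2)"
proof -
  let ?A = "prod y J1" and ?B = "prod y J2" and ?C = "mconst (4 ^ h)" and ?H = "mconst (1/2)"
  have HH: "?H + ?H = 1" by (simp flip: mconst_add)
  have "?H * ((?A - ?B) * (?A - ?B)) + ?H * (?C - ?A * ?A) + ?H * (?C - ?B * ?B)
      = (?H + ?H) * (?C - ?A * ?B)" by (simp add: algebra_simps)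
  also have "\<dots> = mconst (2 ^ (2 * h)) - ?A * ?B" by (simp add: HH power_mult)
  finally have e: "mconst (2 ^ (2 * h)) - ?A * ?B =
     ?H * ((?A - ?B) * (?A - ?B)) + ?H * (?C - ?A * ?A) + ?H * (?C - ?B * ?B)" by simp
  have dA: "dle ?A h" using assms(1,3,5) dle_prod[of J1 y] by auto
  have dB: "dle ?B h" using assms(2,4,5) dle_prod[of J2 y] by auto
  have 1: "Pv n (2 * h) ((?A - ?B) * (?A - ?B))"
    by (rule sos_proves_sq[OF dle_diff[OF dA dB]]) simp
  have 2: "Pv n (2 * h) (?C - ?A * ?A)" using prod_sq_bound[of J1 y n] assms by auto
  have 3: "Pv n (2 * h) (?C - ?B * ?B)" using prod_sq_bound[of J2 y n] assms by auto
  show ?thesis unfolding e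
    by (intro sos_proves_add sos_proves_cscale 1 2 3) auto
qed



lemma pow_le_3: "(1 + real h) ^ h \<le> 3 * real h ^ h"
proof (cases "h = 0")
  case True then show ?thesis by simp
next
  case False
  then have hp: "real h > 0" by simp
  have "(1 + 1 / real h) ^ h \<le> exp (1 / real h) ^ h"
    by (rule power_mono) (use exp_ge_add_one_self[of "1 / real h"] hp in auto)
  also have "\<dots> = exp 1" using hp by (simp flip: exp_of_nat_mult)
  also have "\<dots> \<le> 3" by (rule exp_le)
  finally have a: "(1 + 1 / real h) ^ h \<le> 3" .
  have "(1 + real h) ^ h = real h ^ h * (1 + 1 / real h) ^ h"
    using hp by (simp add: field_simps flip: power_mult_distrib)
  also have "\<dots> \<le> real h ^ h * 3" using a by (intro mult_left_mono) auto
  finally show ?thesis by simp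
qed

lemma pow_fact: "h ^ h \<le> 4 ^ h * fact h"
proof (induction h)
  case 0 then show ?case by simp
next
  case (Suc h)
  have "real (Suc h ^ Suc h) = (1 + real h) * (1 + real h) ^ h"
    by (simp only: power_Suc of_nat_mult of_nat_power of_nat_Suc)
  also have "\<dots> \<le> (1 + real h) * (3 * real h ^ h)"
    by (intro mult_left_mono pow_le_3) auto
  also have "\<dots> \<le> (1 + real h) * (4 * real (h ^ h))" by (intro mult_left_mono) auto
  also have "\<dots> \<le> (1 + real h) * (4 * real (4 ^ h * fact h))"
    using Suc.IH by (intro mult_left_mono) (auto simp del: of_nat_mult of_nat_power of_nat_fact)
  also have "\<dots> = real (4 ^ Suc h * fact (Suc h))" by (simp add: algebra_simps)
  finally show ?case by (simp only: of_nat_le_iff)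
qed

lemma count_arith: "2 ^ (2 * h) * ((k choose h) * h ^ (2 * h)) \<le> (16 * h * k) ^ h"
proof -
  have "(k choose h) * h ^ h \<le> (k choose h) * (4 ^ h * fact h)"
    using pow_fact[of h] by simp
  also have "\<dots> = 4 ^ h * ((k choose h) * fact h)" by simp
  also have "\<dots> \<le> 4 ^ h * k ^ h" using binomial_fact_pow[of k h] by simp
  finally have a: "(k choose h) * h ^ h \<le> 4 ^ h * k ^ h" .
  have p1: "(2::nat) ^ (2 * h) = 4 ^ h" by (simp add: power_mult)
  have p2: "h ^ (2 * h) = h ^ h * h ^ h" by (simp add: mult_2 power_add)
  have "2 ^ (2 * h) * ((k choose h) * h ^ (2 * h)) = 4 ^ h * ((k choose h) * h ^ h) * h ^ h"
    unfolding p1 p2 by (simp only: mult_ac)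
  also have "\<dots> \<le> 4 ^ h * (4 ^ h * k ^ h) * h ^ h" using a by (intro mult_right_mono mult_left_mono) auto
  also have "\<dots> = (4 * 4 * h * k) ^ h" by (simp only: power_mult_distrib mult_ac)
  also have "\<dots> = (16 * h * k) ^ h" by simp
  finally show ?thesis .
qed

lemma count_good:
  assumes "h \<le> k" "s = 2 * h"
  shows "card {t \<in> {..<s} \<rightarrow>\<^sub>E {..<k}. \<forall>\<nu><k. card {j \<in> {..<s}. t j = \<nu>} \<noteq> 1}
         \<le> (k choose h) * h ^ s"
proof -
  let ?G = "{t \<in> {..<s} \<rightarrow>\<^sub>E {..<k}. \<forall>\<nu><k. card {j \<in> {..<s}. t j = \<nu>} \<noteq> 1}"
  let ?F = "{A. A \<subseteq> {..<k} \<and> card A = h}"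
  have sub: "?G \<subseteq> (\<Union>A\<in>?F. {..<s} \<rightarrow>\<^sub>E A)"
  proof
    fix t assume tG: "t \<in> ?G"
    define I where "I = t ` {..<s}"
    have Ik: "I \<subseteq> {..<k}" using tG unfolding I_def by auto
    have fI: "finite I" unfolding I_def by simp
    have "(\<Sum>\<nu>\<in>I. card {j. j \<in> {..<s} \<and> t j = \<nu>}) = (\<Sum>\<nu>\<in>I. \<Sum>j\<in>{j. j \<in> {..<s} \<and> t j = \<nu>}. (1::nat))"
      by simp
    also have "\<dots> = (\<Sum>j\<in>{..<s}. (1::nat))"
      using sum.group[of "{..<s}" I t "\<lambda>_. 1::nat"] fI unfolding I_def by simp
    finally have sumI: "(\<Sum>\<nu>\<in>I. card {j. j \<in> {..<s} \<and> t j = \<nu>}) = s" by simp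
    have "(\<Sum>\<nu>\<in>I. 2) \<le> (\<Sum>\<nu>\<in>I. card {j. j \<in> {..<s} \<and> t j = \<nu>})"
    proof (rule sum_mono)
      fix \<nu> assume "\<nu> \<in> I"
      then obtain j where j: "j < s" "t j = \<nu>" unfolding I_def by auto
      then have ne: "card {j. j \<in> {..<s} \<and> t j = \<nu>} \<noteq> 0" by auto
      have "\<nu> < k" using \<open>\<nu> \<in> I\<close> Ik by auto
      then have "card {j. j \<in> {..<s} \<and> t j = \<nu>} \<noteq> 1" using tG by auto
      with ne show "2 \<le> card {j. j \<in> {..<s} \<and> t j = \<nu>}" by linarith
    qed
    then have cI: "card I \<le> h" using sumI assms(2) by simp
    have "h - card I \<le> card ({..<k} - I)"
      using Ik assms(1) by (simp add: card_Diff_subset fI)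
    then obtain B where B: "B \<subseteq> {..<k} - I" "card B = h - card I" "finite B"
      by (rule obtain_subset_with_card_n)
    have "I \<inter> B = {}" using B(1) by blast
    then have "card (I \<union> B) = card I + card B" using fI B(3) by (simp add: card_Un_disjoint)
    then have "I \<union> B \<in> ?F"
      using B Ik cI by auto
    moreover have "t \<in> {..<s} \<rightarrow>\<^sub>E (I \<union> B)"
      using tG unfolding I_def by (auto simp: PiE_def Pi_def)
    ultimately show "t \<in> (\<Union>A\<in>?F. {..<s} \<rightarrow>\<^sub>E A)" by blast
  qed
  have fF: "finite ?F" by (rule finite_subset[of _ "Pow {..<k}"]) auto
  have "card ?G \<le> card (\<Union>A\<in>?F. {..<s} \<rightarrow>\<^sub>E A)"
  proof (rule card_mono[OF _ sub], rule finite_UN_I[OF fF])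
    fix A assume "A \<in> ?F"
    then have "finite A" using finite_subset[of A "{..<k}"] by auto
    then show "finite ({..<s} \<rightarrow>\<^sub>E A)" by (intro finite_PiE) auto
  qed
  also have "\<dots> \<le> (\<Sum>A\<in>?F. card ({..<s} \<rightarrow>\<^sub>E A))" by (rule card_UN_le[OF fF])
  also have "\<dots> = (\<Sum>A\<in>?F. h ^ s)" by (intro sum.cong) (auto simp: card_PiE)
  also have "\<dots> = (k choose h) * h ^ s" using n_subsets[of "{..<k}" h] by simp
  finally show ?thesis .
qed



lemma lin_form_freq:
  assumes z: "z \<in> {..<k} \<rightarrow>\<^sub>E {..<n}" and k: "k > 0"
  shows "lin_form n (\<lambda>i. freq k z i - p i) = mconst (1 / real k) * (\<Sum>\<nu><k. mvar (z \<nu>) - lin_form n p)"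
proof -
  have fib: "(\<Sum>i<n. of_nat (card {\<nu>. \<nu> < k \<and> z \<nu> = i}) * mvar i) = (\<Sum>\<nu><k. mvar (z \<nu>))"
  proof -
    have "(\<Sum>i<n. of_nat (card {\<nu>. \<nu> < k \<and> z \<nu> = i}) * mvar i)
        = (\<Sum>i<n. \<Sum>\<nu>\<in>{x. x \<in> {..<k} \<and> z x = i}. mvar (z \<nu>))"
      by (intro sum.cong) auto
    also have "\<dots> = (\<Sum>\<nu><k. mvar (z \<nu>))"
      using sum.group[of "{..<k}" "{..<n}" z "\<lambda>\<nu>. mvar (z \<nu>)"] z by (auto simp: PiE_def Pi_def)
    finally show ?thesis .
  qed
  have "lin_form n (\<lambda>i. freq k z i - p i)
      = (\<Sum>i<n. mconst (freq k z i) * mvar i) - lin_form n p"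
    unfolding lin_form_def by (simp add: mconst_diff left_diff_distrib sum_subtractf)
  also have "(\<Sum>i<n. mconst (freq k z i) * mvar i)
      = mconst (1 / real k) * (\<Sum>i<n. of_nat (card {\<nu>. \<nu> < k \<and> z \<nu> = i}) * mvar i)"
    unfolding freq_def sum_distrib_left
    by (intro sum.cong) (simp_all add: mconst_mult mconst_of_nat divide_inverse mult_ac)
  also have "\<dots> = mconst (1 / real k) * (\<Sum>\<nu><k. mvar (z \<nu>))" unfolding fib ..
  also have "lin_form n p = mconst (1 / real k) * (of_nat k * lin_form n p)"
  proof -
    have "mconst (1 / real k) * of_nat k = 1" using k by (simp flip: mconst_of_nat mconst_mult)
    then show ?thesis by (simp add: mult.assoc[symmetric])
  qed
  finally show ?thesis by (simp add: sum_subtractf right_diff_distrib)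
qed

lemma power_sum_PiE:
  fixes a :: "nat \<Rightarrow> 'a::comm_semiring_1"
  shows "(\<Sum>\<nu><k. a \<nu>) ^ s = (\<Sum>t\<in>{..<s} \<rightarrow>\<^sub>E {..<k}. \<Prod>j<s. a (t j))"
proof -
  have "(\<Sum>\<nu><k. a \<nu>) ^ s = (\<Prod>j<s. \<Sum>\<nu><k. a \<nu>)" by simp
  also have "\<dots> = (\<Sum>t\<in>{..<s} \<rightarrow>\<^sub>E {..<k}. \<Prod>j<s. a (t j))"
    by (rule prod_sum_PiE) auto
  finally show ?thesis .
qed



theorem lemma3p9:
  fixes n k s :: nat and p :: "nat \<Rightarrow> real"
  assumes "p \<in> prob_simplex n"
    and "even s" and "2 \<le> s" and "s \<le> k"
  shows "sos_proves (bool_axioms n) s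
           (mconst ((8 * real s / real k) ^ (s div 2))
            - mul_expect n k p (\<lambda>Y. lin_form n (\<lambda>i. Y i - p i) ^ s))"
proof -
  define h where "h = s div 2"
  have s2: "s = 2 * h" using assms(2) h_def by auto
  have hk: "h \<le> k" using assms(4) s2 by simp
  have kpos: "k > 0" using assms(3,4) by simp
  have pnn: "\<And>i. i < n \<Longrightarrow> 0 \<le> p i" using assms(1) unfolding prob_simplex_def by auto
  have psum: "(\<Sum>i<n. p i) = 1" using assms(1) unfolding prob_simplex_def by auto
  define m where "m = lin_form n p"
  define X where "X i = mvar i - m" for i
  define Z where "Z = {..<k} \<rightarrow>\<^sub>E {..<n}"
  define TS where "TS = {..<s} \<rightarrow>\<^sub>E {..<k}"
  define w where "w z = (\<Prod>\<nu><k. p (z \<nu>))" for z :: "nat \<Rightarrow> nat"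
  define T where "T t = (\<Sum>z\<in>Z. mconst (w z) * (\<Prod>j<s. X (z (t j))))" for t
  define G where "G = {t \<in> TS. \<forall>\<nu><k. card {j \<in> {..<s}. t j = \<nu>} \<noteq> 1}"
  define c where "c = (1 / real k) ^ s"
  have fZ: "finite Z" unfolding Z_def by (simp add: finite_PiE)
  have fTS: "finite TS" unfolding TS_def by (simp add: finite_PiE)
  have zn: "z \<nu> < n" if "z \<in> Z" "\<nu> < k" for z \<nu> using that unfolding Z_def by auto
  have wnn: "0 \<le> w z" if "z \<in> Z" for z
    unfolding w_def using zn[OF that] pnn by (intro prod_nonneg) auto
  have wsum: "(\<Sum>z\<in>Z. w z) = 1"
  proof -
    have "(\<Sum>z\<in>Z. w z) = (\<Prod>\<nu><k. \<Sum>i<n. p i)"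
      unfolding Z_def w_def by (rule prod_sum_PiE[symmetric]) auto
    then show ?thesis using psum by simp
  qed
  have LB: "lin_form n (\<lambda>i. freq k z i - p i) ^ s = mconst c * (\<Sum>t\<in>TS. \<Prod>j<s. X (z (t j)))"
    if "z \<in> Z" for z
  proof -
    have "lin_form n (\<lambda>i. freq k z i - p i) = mconst (1 / real k) * (\<Sum>\<nu><k. X (z \<nu>))"
      using lin_form_freq[of z k n p] that kpos unfolding Z_def X_def m_def by simp
    then show ?thesis
      unfolding c_def TS_def by (simp add: power_mult_distrib mconst_power power_sum_PiE)
  qed
  have EC: "mul_expect n k p (\<lambda>Y. lin_form n (\<lambda>i. Y i - p i) ^ s) = mconst c * (\<Sum>t\<in>TS. T t)"
  proof -
    have "mul_expect n k p (\<lambda>Y. lin_form n (\<lambda>i. Y i - p i) ^ s)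
        = (\<Sum>z\<in>Z. mconst (w z) * (mconst c * (\<Sum>t\<in>TS. \<Prod>j<s. X (z (t j)))))"
      unfolding mul_expect_def Z_def[symmetric] w_def[symmetric] using LB by (intro sum.cong) auto
    also have "\<dots> = mconst c * (\<Sum>z\<in>Z. \<Sum>t\<in>TS. mconst (w z) * (\<Prod>j<s. X (z (t j))))"
      by (simp add: sum_distrib_left mult_ac)
    also have "\<dots> = mconst c * (\<Sum>t\<in>TS. T t)"
      unfolding T_def by (subst sum.swap) simp
    finally show ?thesis .
  qed
  have Tzero: "T t = 0" if tT: "t \<in> TS" and nu0: "\<nu>0 < k" and c1: "card {j \<in> {..<s}. t j = \<nu>0} = 1" for t \<nu>0
  proof -
    define cc where "cc \<nu> = card {x. x \<in> {..<s} \<and> t x = \<nu>}" for \<nu>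
    define g where "g \<nu> i = mconst (p i) * X i ^ cc \<nu>" for \<nu> i
    have tk: "t ` {..<s} \<subseteq> {..<k}" using tT unfolding TS_def by auto
    have "mconst (w z) * (\<Prod>j<s. X (z (t j))) = (\<Prod>\<nu><k. g \<nu> (z \<nu>))" if "z \<in> Z" for z
    proof -
      have "(\<Prod>j<s. X (z (t j))) = (\<Prod>\<nu><k. \<Prod>j\<in>{x. x \<in> {..<s} \<and> t x = \<nu>}. X (z (t j)))"
        using prod.group[of "{..<s}" "{..<k}" t "\<lambda>j. X (z (t j))"] tk by simp
      also have "\<dots> = (\<Prod>\<nu><k. X (z \<nu>) ^ cc \<nu>)"
        unfolding cc_def by (intro prod.cong refl) simp
      finally show ?thesis
        unfolding g_def w_def by (simp add: mconst_prod prod.distrib)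
    qed
    then have "T t = (\<Sum>z\<in>Z. \<Prod>\<nu><k. g \<nu> (z \<nu>))" unfolding T_def by (intro sum.cong) auto
    also have "\<dots> = (\<Prod>\<nu><k. \<Sum>i<n. g \<nu> i)"
      unfolding Z_def by (rule prod_sum_PiE[symmetric]) auto
    also have "\<dots> = 0"
    proof (rule prod_zero)
      have "(\<Sum>i<n. g \<nu>0 i) = (\<Sum>i<n. mconst (p i) * mvar i) - (\<Sum>i<n. mconst (p i)) * m"
        using c1 unfolding g_def cc_def X_def
        by (simp add: right_diff_distrib sum_subtractf sum_distrib_right)
      also have "\<dots> = 0" using simplex_sum[OF assms(1)] unfolding m_def lin_form_def by simp
      finally show "\<exists>a\<in>{..<k}. (\<Sum>i<n. g a i) = 0" using nu0 by auto
    qed simp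
    finally show ?thesis .
  qed
  have ED: "(\<Sum>t\<in>TS. T t) = (\<Sum>t\<in>G. T t)"
    by (rule sum.mono_neutral_right[OF fTS]) (auto simp: G_def intro: Tzero)
  have EE: "Pv n s (mconst (2 ^ s) - T t)" if tT: "t \<in> TS" for t
  proof -
    have "mconst (2 ^ s) - T t = (\<Sum>z\<in>Z. mconst (w z) * (mconst (2 ^ s) - (\<Prod>j<s. X (z (t j)))))"
    proof -
      have "mconst (2 ^ s) = (\<Sum>z\<in>Z. mconst (w z)) * mconst (2 ^ s)"
        using wsum by (simp flip: mconst_sum)
      then show ?thesis unfolding T_def by (simp add: right_diff_distrib sum_subtractf sum_distrib_right)
    qed
    also have "Pv n s \<dots>"
    proof (rule sos_proves_sum, rule sos_proves_cscale)
      fix z assume zZ: "z \<in> Z"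
      show "0 \<le> w z" using wnn[OF zZ] .
      let ?y = "\<lambda>j. X (z (t j))"
      have split: "{..<s} = {..<h} \<union> {h..<s}" using s2 by auto
      have "(\<Prod>j<s. ?y j) = prod ?y {..<h} * prod ?y {h..<s}"
        unfolding split by (rule prod.union_disjoint) auto
      moreover have "Pv n (2 * h) (mconst (2 ^ (2 * h)) - prod ?y {..<h} * prod ?y {h..<s})"
      proof (rule amgm)
        fix j assume "j \<in> {..<h} \<union> {h..<s}"
        then have "j < s" using s2 by auto
        then have "z (t j) < n" using tT zn[OF zZ] unfolding TS_def by auto
        then show "dle (?y j) 1 \<and> Pv n 2 (mconst 4 - ?y j * ?y j)"
          using box[OF assms(1)] dle_diff[OF dle_mvar dle_lin_form] unfolding X_def m_def by auto
      qed (use s2 in auto)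
      ultimately show "Pv n s (mconst (2 ^ s) - (\<Prod>j<s. ?y j))" using s2 by simp
    qed
    finally show ?thesis .
  qed
  have cardG: "card G \<le> (k choose h) * h ^ s"
    unfolding G_def TS_def using count_good[OF hk s2] by simp
  have arith: "c * 2 ^ s * real (card G) \<le> (8 * real s / real k) ^ h"
  proof -
    have "real (2 ^ s * card G) \<le> real (2 ^ (2 * h) * ((k choose h) * h ^ (2 * h)))"
      using cardG s2 by (simp del: of_nat_mult of_nat_power)
    also have "\<dots> \<le> real ((16 * h * k) ^ h)" using count_arith[of h k] by (simp only: of_nat_le_iff)
    finally have a: "2 ^ s * real (card G) \<le> (16 * real h * real k) ^ h" by simp
    have kp: "real k ^ s > 0" using kpos by simp
    have "c * 2 ^ s * real (card G) = (2 ^ s * real (card G)) / real k ^ s"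
      unfolding c_def by (simp add: power_one_over)
    also have "\<dots> \<le> (16 * real h * real k) ^ h / real k ^ s"
      using a kp by (intro divide_right_mono) auto
    also have "\<dots> = (8 * real s / real k) ^ h"
      using kpos s2 by (simp add: power_mult_distrib power_divide power_mult field_simps power2_eq_square)
    finally show ?thesis .
  qed
  have final: "mconst ((8 * real s / real k) ^ h) - mconst c * (\<Sum>t\<in>G. T t)
     = mconst ((8 * real s / real k) ^ h - c * 2 ^ s * real (card G))
       + mconst c * (\<Sum>t\<in>G. mconst (2 ^ s) - T t)"
    by (simp add: sum_subtractf mconst_diff mconst_mult mconst_of_nat algebra_simps mconst_power)
  have "Pv n s (mconst ((8 * real s / real k) ^ h) - mconst c * (\<Sum>t\<in>G. T t))"
    unfolding final
  proof (rule sos_proves_add)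
    show "Pv n s (mconst ((8 * real s / real k) ^ h - c * 2 ^ s * real (card G)))"
      using arith by (intro sos_proves_const) simp
    show "Pv n s (mconst c * (\<Sum>t\<in>G. mconst (2 ^ s) - T t))"
      using EE unfolding c_def G_def by (intro sos_proves_cscale sos_proves_sum) auto
  qed
  then show ?thesis unfolding EC ED h_def .
qed


end
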